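(* Let $G_1=(V_1,E_1)$ and $G_2=(V_2,E_2)$ be word-representable graphs with disjoint vertex sets, $\mathcal{R}(G_1)=k_1$, $\mathcal{R}(G_2)=k_2$, and let $x\in V_1$, $y\in V_2$, $k=\max(k_1,k_2)$. Let $G'$ be the graph with vertex set $V_1\cup V_2$ and edge set $E_1\cup E_2\cup\{(x,y)\}$, and let $G''$ be the graph obtained from $G_1$ and $G_2$ by identifying $x$ and $y$ into a single vertex $z$. Then: (1) if $|V_1|=|V_2|=1$, then $G'$ and $G''$ are complete graphs, $k_1=k_2=1$, and $\mathcal{R}(G')=\mathcal{R}(G'')=1$; (2) if $\min(|V_1|,|V_2|)=1$ and $\max(|V_1|,|V_2|)>1$, then $\mathcal{R}(G'')=k$ and $\mathcal{R}(G')=\max(k,2)$; (3) if $\min(|V_1|,|V_2|)>1$, then $\mathcal{R}(G')=\mathcal{R}(G'')=\max(k,2)$.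
   Context: All graphs are finite and simple. For a word $w$ and distinct letters $x,y$ occurring in $w$, $x$ and $y$ alternate in $w$ if deleting all letters other than copies of $x$ and $y$ yields a word of the form $xyxy\cdots$ or $yxyx\cdots$ (of even or odd length). A graph $G=(V,E)$ is word-representable if there is a word $w$ over $V$ (each vertex occurring in $w$) such that for all distinct $x,y\in V$, $x$ and $y$ alternate in $w$ iff $(x,y)\in E$. A word is $k$-uniform if each letter occurs exactly $k$ times; $G$ is $k$-word-representable if some $k$-uniform word represents it; the representation number $\mathcal{R}(G)$ is the least such $k$. *)

theory Defs
  imports Main
begin

definition simple_graph :: "'a set \<Rightarrow> ('a \<times> 'a) set \<Rightarrow> bool" where
  "simple_graph V E \<longleftrightarrow> finite V \<and> E \<subseteq> V \<times> V \<and> sym E \<and> irrefl E"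

definition complete_graph :: "'a set \<Rightarrow> ('a \<times> 'a) set \<Rightarrow> bool" where
  "complete_graph V E \<longleftrightarrow> (\<forall>u\<in>V. \<forall>v\<in>V. u \<noteq> v \<longrightarrow> (u, v) \<in> E)"

definition alternate :: "'a list \<Rightarrow> 'a \<Rightarrow> 'a \<Rightarrow> bool" where
  "alternate w x y \<longleftrightarrow>
     (let u = filter (\<lambda>c. c = x \<or> c = y) w in
       u = map (\<lambda>i. if even i then x else y) [0..<length u] \<or>
       u = map (\<lambda>i. if even i then y else x) [0..<length u])"

definition represents :: "'a set \<Rightarrow> ('a \<times> 'a) set \<Rightarrow> 'a list \<Rightarrow> bool" where
  "represents V E w \<longleftrightarrow> set w = V \<and>
     (\<forall>x\<in>V. \<forall>y\<in>V. x \<noteq> y \<longrightarrow> (alternate w x y \<longleftrightarrow> (x, y) \<in> E))"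

definition uniform_word :: "nat \<Rightarrow> 'a list \<Rightarrow> bool" where
  "uniform_word k w \<longleftrightarrow> (\<forall>a\<in>set w. count_list w a = k)"

definition word_representable :: "'a set \<Rightarrow> ('a \<times> 'a) set \<Rightarrow> bool" where
  "word_representable V E \<longleftrightarrow> (\<exists>w. represents V E w)"

definition k_word_representable :: "nat \<Rightarrow> 'a set \<Rightarrow> ('a \<times> 'a) set \<Rightarrow> bool" where
  "k_word_representable k V E \<longleftrightarrow> (\<exists>w. uniform_word k w \<and> represents V E w)"

definition rep_num :: "'a set \<Rightarrow> ('a \<times> 'a) set \<Rightarrow> nat" where
  "rep_num V E = (LEAST k. k_word_representable k V E)"

definition bridge_V :: "'a set \<Rightarrow> 'a set \<Rightarrow> 'a set" where
  "bridge_V V1 V2 = V1 \<union> V2"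
definition bridge_E :: "('a \<times> 'a) set \<Rightarrow> ('a \<times> 'a) set \<Rightarrow> 'a \<Rightarrow> 'a \<Rightarrow> ('a \<times> 'a) set" where
  "bridge_E E1 E2 x y = E1 \<union> E2 \<union> {(x, y), (y, x)}"

definition merge_vx :: "'a \<Rightarrow> 'a \<Rightarrow> 'a \<Rightarrow> 'a \<Rightarrow> 'a" where
  "merge_vx x y z v = (if v = x \<or> v = y then z else v)"
definition ident_V :: "'a set \<Rightarrow> 'a set \<Rightarrow> 'a \<Rightarrow> 'a \<Rightarrow> 'a \<Rightarrow> 'a set" where
  "ident_V V1 V2 x y z = (V1 - {x}) \<union> (V2 - {y}) \<union> {z}"
definition ident_E :: "('a \<times> 'a) set \<Rightarrow> ('a \<times> 'a) set \<Rightarrow> 'a \<Rightarrow> 'a \<Rightarrow> 'a \<Rightarrow> ('a \<times> 'a) set" where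
  "ident_E E1 E2 x y z = (\<lambda>(a, b). (merge_vx x y z a, merge_vx x y z b)) ` (E1 \<union> E2)"

end

theory Submission
  imports Defs
begin


definition altl :: "'a \<Rightarrow> 'a \<Rightarrow> nat \<Rightarrow> 'a list" where
  "altl a b n = map (\<lambda>i. if even i then a else b) [0..<n]"

lemma altl_0[simp]: "altl a b 0 = []" by (simp add: altl_def)

lemma length_altl[simp]: "length (altl a b n) = n" by (simp add: altl_def)

lemma altl_Suc: "altl a b (Suc n) = a # altl b a n"
  unfolding altl_def by (induction n) auto

lemma altl_succ: "a \<noteq> b \<Longrightarrow> successively (\<noteq>) (altl a b n)"
proof (induction n arbitrary: a b)
  case 0 then show ?case by (simp add: altl_def)
next
  case (Suc n) then show ?case
    by (cases n) (auto simp: altl_Suc)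
qed

lemma succ_altl:
  "successively (\<noteq>) u \<Longrightarrow> set u \<subseteq> {a, b} \<Longrightarrow> a \<noteq> b \<Longrightarrow> u \<noteq> [] \<Longrightarrow> hd u = a \<Longrightarrow>
   u = altl a b (length u)"
proof (induction u arbitrary: a b)
  case Nil then show ?case by simp
next
  case (Cons c u)
  show ?case
  proof (cases u)
    case Nil then show ?thesis using Cons.prems by (simp add: altl_def)
  next
    case (Cons d r)
    with Cons.prems have "d = b" by auto
    have su: "successively (\<noteq>) u" using Cons.prems(1) \<open>u = d # r\<close> by simp
    have st: "set u \<subseteq> {b, a}" using Cons.prems(2) by auto
    have "u = altl b a (length u)"
      using Cons.IH[OF su st] Cons.prems(3) \<open>u = d # r\<close> \<open>d = b\<close> by auto
    moreover have "c = a" using Cons.prems(5) by simp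
    ultimately have "c # u = a # altl b a (length u)" by (metis (no_types))
    also have "\<dots> = altl a b (length (c # u))" by (simp add: altl_Suc)
    finally show ?thesis .
  qed
qed

lemma alternate_iff:
  assumes "a \<noteq> b"
  shows "alternate w a b \<longleftrightarrow> successively (\<noteq>) (filter (\<lambda>c. c = a \<or> c = b) w)"
proof -
  let ?u = "filter (\<lambda>c. c = a \<or> c = b) w"
  have s: "set ?u \<subseteq> {a,b}" by auto
  have "alternate w a b \<longleftrightarrow> ?u = altl a b (length ?u) \<or> ?u = altl b a (length ?u)"
    unfolding alternate_def altl_def Let_def by (rule refl)
  also have "\<dots> \<longleftrightarrow> successively (\<noteq>) ?u"
  proof
    assume "?u = altl a b (length ?u) \<or> ?u = altl b a (length ?u)"
    then show "successively (\<noteq>) ?u"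
    proof
      assume "?u = altl a b (length ?u)" then show ?thesis using altl_succ[OF assms] by (metis (no_types))
    next
      assume "?u = altl b a (length ?u)" then show ?thesis using altl_succ[of b a] assms by (metis (no_types))
    qed
  next
    assume h: "successively (\<noteq>) ?u"
    show "?u = altl a b (length ?u) \<or> ?u = altl b a (length ?u)"
    proof (cases "?u = []")
      case True then show ?thesis by (simp add: altl_def)
    next
      case False
      then have "hd ?u \<in> {a,b}" using s hd_in_set by blast
      then consider "hd ?u = a" | "hd ?u = b" by blast
      then show ?thesis
      proof cases
        case 1 then show ?thesis using succ_altl[OF h s assms False] by blast
      next
        case 2
        have s': "set ?u \<subseteq> {b,a}" using s by blast
        show ?thesis using succ_altl[OF h s' _ False 2] assms by blast
      qed
    qed
  qed
  finally show ?thesis .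
qed


lemma alternate_sym: "alternate w a b \<longleftrightarrow> alternate w b a"
proof (cases "a = b")
  case True then show ?thesis by simp
next
  case False
  have "filter (\<lambda>c. c = a \<or> c = b) w = filter (\<lambda>c. c = b \<or> c = a) w"
    by (rule filter_cong) auto
  then show ?thesis using alternate_iff[OF False] alternate_iff[of b a] False by simp
qed

lemma alternate_filter:
  assumes "a \<in> S" "b \<in> S"
  shows "alternate (filter (\<lambda>c. c \<in> S) w) a b \<longleftrightarrow> alternate w a b"
proof -
  have "filter (\<lambda>c. c = a \<or> c = b) (filter (\<lambda>c. c \<in> S) w) = filter (\<lambda>c. c = a \<or> c = b) w"
    using assms by (induction w) auto
  then show ?thesis unfolding alternate_def by simp
qed

lemma count_alt:
  "u \<noteq> [] \<Longrightarrow> set u \<subseteq> {hd u, d} \<Longrightarrow> hd u \<noteq> d \<Longrightarrow> successively (\<noteq>) u \<Longrightarrow>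
   count_list u (hd u) = count_list u d + (if last u = hd u then 1 else 0)"
proof (induction u arbitrary: d)
  case Nil then show ?case by simp
next
  case (Cons c r)
  show ?case
  proof (cases r)
    case Nil then show ?thesis using Cons.prems by simp
  next
    case (Cons e r')
    have ec: "e \<noteq> c" using Cons.prems(4) \<open>r = e # r'\<close> by auto
    have ed: "e = d" using Cons.prems(2) \<open>r = e # r'\<close> ec by auto
    have sr: "successively (\<noteq>) r" using Cons.prems(4) \<open>r = e # r'\<close> by simp
    have st: "set r \<subseteq> {hd r, c}" using Cons.prems(2) \<open>r = e # r'\<close> ed by auto
    have IH: "count_list r d = count_list r c + (if last r = d then 1 else 0)"
      using Cons.IH[of c] \<open>r = e # r'\<close> ed ec st sr by simp
    have lr: "last r \<in> {c, d}" using st \<open>r = e # r'\<close> ed last_in_set[of r] by auto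
    have cd: "c \<noteq> d" using ec ed by simp
    show ?thesis using IH lr cd \<open>r = e # r'\<close> by auto
  qed
qed

lemma hd_filter_takeWhile:
  assumes "b \<in> set (takeWhile (\<lambda>c. c \<noteq> a) w)" "Q b"
  shows "filter Q w \<noteq> [] \<and> hd (filter Q w) \<noteq> a"
proof -
  let ?t = "takeWhile (\<lambda>c. c \<noteq> a) w"
  have w: "w = ?t @ dropWhile (\<lambda>c. c \<noteq> a) w" by simp
  have ne: "filter Q ?t \<noteq> []" using assms by (auto simp: filter_empty_conv)
  have "hd (filter Q ?t) \<in> set ?t" using ne hd_in_set[OF ne] by auto
  then have "hd (filter Q ?t) \<noteq> a" by (metis (mono_tags, lifting) set_takeWhileD)
  moreover have "filter Q w = filter Q ?t @ filter Q (dropWhile (\<lambda>c. c \<noteq> a) w)"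
    by (subst w, rule filter_append)
  ultimately show ?thesis using ne by simp
qed

lemma prepend_rep:
  assumes rep: "represents V E w" and aw: "a \<in> set w"
    and cond: "\<forall>b\<in>set w. b \<noteq> a \<longrightarrow>
        count_list w a < count_list w b \<or> b \<in> set (takeWhile (\<lambda>c. c \<noteq> a) w)"
  shows "represents V E (a # w)"
proof -
  have key: "alternate (a # w) a b \<longleftrightarrow> alternate w a b" if b: "b \<in> set w" "b \<noteq> a" for b
  proof -
    let ?Q = "\<lambda>c. c = a \<or> c = b"
    let ?u = "filter ?Q w"
    have "?u \<noteq> [] \<and> (successively (\<noteq>) ?u \<longrightarrow> hd ?u \<noteq> a)"
    proof (cases "count_list w a < count_list w b")
      case True
      have une: "?u \<noteq> []" using b by (auto simp: filter_empty_conv)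
      moreover have "hd ?u \<noteq> a" if s: "successively (\<noteq>) ?u"
      proof
        assume h: "hd ?u = a"
        have "set ?u \<subseteq> {hd ?u, b}" using h by auto
        from count_alt[OF une this _ s] h b(2)
        have "count_list ?u a \<ge> count_list ?u b" by simp
        moreover have "count_list ?u a = count_list w a" "count_list ?u b = count_list w b"
          by (induction w) auto
        ultimately show False using True by simp
      qed
      ultimately show ?thesis by blast
    next
      case False
      then have "b \<in> set (takeWhile (\<lambda>c. c \<noteq> a) w)" using cond b by blast
      from hd_filter_takeWhile[OF this, of ?Q] show ?thesis by simp
    qed
    then have "successively (\<noteq>) (a # ?u) \<longleftrightarrow> successively (\<noteq>) ?u"
      by (auto simp: successively_Cons)
    then show ?thesis using alternate_iff[of a b] b(2) by simp
  qed
  have "set (a # w) = set w" using aw by auto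
  moreover have "alternate (a # w) p q \<longleftrightarrow> alternate w p q" if "p \<in> set w" "q \<in> set w" "p \<noteq> q" for p q
  proof (cases "p = a \<or> q = a")
    case True
    then show ?thesis using key that alternate_sym by metis
  next
    case False
    have "filter (\<lambda>c. c = p \<or> c = q) (a # w) = filter (\<lambda>c. c = p \<or> c = q) w" using False by auto
    then show ?thesis unfolding alternate_def by simp
  qed
  ultimately show ?thesis using rep unfolding represents_def by auto
qed


lemma length_takeWhile_less: "a \<in> set w \<Longrightarrow> length (takeWhile (\<lambda>c. c \<noteq> a) w) < length w"
  by (induction w) auto

lemma takeWhile_index_mem:
  assumes "a \<in> set w" "b \<in> set w" "a \<noteq> b"
    and lt: "length (takeWhile (\<lambda>c. c \<noteq> b) w) \<le> length (takeWhile (\<lambda>c. c \<noteq> a) w)"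
  shows "b \<in> set (takeWhile (\<lambda>c. c \<noteq> a) w)"
proof -
  let ?fb = "length (takeWhile (\<lambda>c. c \<noteq> b) w)"
  let ?fa = "length (takeWhile (\<lambda>c. c \<noteq> a) w)"
  have la: "?fa < length w" using assms(1) by (simp add: length_takeWhile_less)
  have lb: "?fb < length w" using assms(2) by (simp add: length_takeWhile_less)
  have wa: "w ! ?fa = a" using nth_length_takeWhile[OF la] by simp
  have wb: "w ! ?fb = b" using nth_length_takeWhile[OF lb] by simp
  have "?fb \<noteq> ?fa" using wa wb assms(3) by metis
  then have "?fb < ?fa" using lt by simp
  then have "takeWhile (\<lambda>c. c \<noteq> a) w ! ?fb = b" using takeWhile_nth wb by metis
  then show ?thesis using \<open>?fb < ?fa\<close> by (metis nth_mem)
qed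

lemma uni_aux:
  "\<forall>w. represents V E w \<longrightarrow> w \<noteq> [] \<longrightarrow> (\<forall>c\<in>set w. count_list w c \<le> M) \<longrightarrow>
     (\<Sum>c\<in>set w. M - count_list w c) = n \<longrightarrow> k_word_representable M V E"
proof (induction n rule: less_induct)
  case (less n)
  show ?case
  proof (intro allI impI)
    fix w assume rep: "represents V E w" and ne: "w \<noteq> []"
      and le: "\<forall>c\<in>set w. count_list w c \<le> M" and n: "(\<Sum>c\<in>set w. M - count_list w c) = n"
    show "k_word_representable M V E"
    proof (cases "\<forall>c\<in>set w. count_list w c = M")
      case True
      then show ?thesis using rep unfolding k_word_representable_def uniform_word_def by blast
    next
      case False
      let ?S = "set w"
      let ?mn = "Min (count_list w ` ?S)"
      let ?Mn = "{c\<in>?S. count_list w c = ?mn}"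
      let ?f = "\<lambda>c. length (takeWhile (\<lambda>d. d \<noteq> c) w)"
      have Sne: "?S \<noteq> {}" using ne by simp
      have mnin: "?mn \<in> count_list w ` ?S" using Sne by (intro Min_in) auto
      have mnle: "?mn \<le> count_list w c" if "c \<in> ?S" for c using that by simp
      obtain c0 where c0: "c0 \<in> ?S" "count_list w c0 < M" using False le by force
      have mnlt: "?mn < M" using mnle[OF c0(1)] c0(2) by simp
      have Mnne: "?Mn \<noteq> {}" using mnin by auto
      have Mnfin: "finite ?Mn" by simp
      have "Max (?f ` ?Mn) \<in> ?f ` ?Mn" using Mnne Mnfin by (intro Max_in) auto
      then obtain a where a: "a \<in> ?Mn" "?f a = Max (?f ` ?Mn)" by auto
      have amax: "?f b \<le> ?f a" if "b \<in> ?Mn" for b using a(2) Mnfin that by simp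
      have cond: "\<forall>b\<in>set w. b \<noteq> a \<longrightarrow>
        count_list w a < count_list w b \<or> b \<in> set (takeWhile (\<lambda>c. c \<noteq> a) w)"
      proof (intro ballI impI)
        fix b assume b: "b \<in> set w" "b \<noteq> a"
        show "count_list w a < count_list w b \<or> b \<in> set (takeWhile (\<lambda>c. c \<noteq> a) w)"
        proof (cases "count_list w b = ?mn")
          case True
          then have "b \<in> ?Mn" using b by simp
          then have "?f b \<le> ?f a" by (rule amax)
          then show ?thesis using takeWhile_index_mem[of a w b] a(1) b by auto
        next
          case False
          then show ?thesis using mnle[OF b(1)] a(1) by auto
        qed
      qed
      have aw: "a \<in> set w" using a(1) by simp
      have rep': "represents V E (a # w)" by (rule prepend_rep[OF rep aw cond])
      have le': "\<forall>c\<in>set (a # w). count_list (a # w) c \<le> M"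
        using le a(1) mnlt by auto
      have sw: "set (a # w) = set w" using aw by auto
      have "(\<Sum>c\<in>set w. M - count_list w c) = (M - count_list w a) + (\<Sum>c\<in>set w - {a}. M - count_list w c)"
        using aw by (simp add: sum.remove)
      moreover have "(\<Sum>c\<in>set (a # w). M - count_list (a # w) c) = (M - count_list (a # w) a) + (\<Sum>c\<in>set w - {a}. M - count_list (a # w) c)"
        using aw sw by (simp add: sum.remove)
      moreover have "(\<Sum>c\<in>set w - {a}. M - count_list (a # w) c) = (\<Sum>c\<in>set w - {a}. M - count_list w c)"
        by (rule sum.cong) auto
      moreover have "count_list (a # w) a = count_list w a + 1" by simp
      moreover have "count_list w a < M" using a(1) mnlt by simp
      ultimately have lt: "(\<Sum>c\<in>set (a # w). M - count_list (a # w) c) < n" using n by simp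
      show ?thesis using less.IH[OF lt] rep' le' by blast
    qed
  qed
qed

lemma uniformize:
  assumes "represents V E w" "w \<noteq> []" "\<forall>c\<in>set w. count_list w c \<le> M"
  shows "k_word_representable M V E"
  using uni_aux assms by blast

lemma wr_krep:
  assumes "word_representable V E" "V \<noteq> {}"
  shows "\<exists>k. k_word_representable k V E"
proof -
  obtain w where w: "represents V E w" using assms(1) unfolding word_representable_def by blast
  then have ne: "w \<noteq> []" using assms(2) unfolding represents_def by auto
  have "\<forall>c\<in>set w. count_list w c \<le> length w" by (simp add: count_le_length)
  then show ?thesis using uniformize[OF w ne] by blast
qed

lemma krep_raise:
  assumes "k_word_representable k V E" "k \<le> M" "V \<noteq> {}"
  shows "k_word_representable M V E"
proof -
  obtain w where w: "uniform_word k w" "represents V E w"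
    using assms(1) unfolding k_word_representable_def by blast
  then have ne: "w \<noteq> []" using assms(3) unfolding represents_def by auto
  have "\<forall>c\<in>set w. count_list w c \<le> M" using w(1) assms(2) unfolding uniform_word_def by simp
  then show ?thesis using uniformize[OF w(2) ne] by blast
qed


lemma rot_equiv:
  assumes "set (c # u) \<subseteq> {a, b}" "a \<noteq> b" "count_list (c # u) a = count_list (c # u) b"
  shows "successively (\<noteq>) (c # u) \<longleftrightarrow> successively (\<noteq>) (u @ [c])"
proof -
  obtain d where d: "{a, b} = {c, d}" "c \<noteq> d" using assms(1,2) by auto
  have cnt: "count_list (c # u) c = count_list (c # u) d" using assms(3) d by (auto simp: doubleton_eq_iff)
  have sets: "set (c # u) \<subseteq> {c, d}" using assms(1) d by simp
  show ?thesis
  proof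
    assume s: "successively (\<noteq>) (c # u)"
    show "successively (\<noteq>) (u @ [c])"
    proof (cases "u = []")
      case True then show ?thesis by simp
    next
      case False
      have "count_list (c # u) c = count_list (c # u) d + (if last (c # u) = c then 1 else 0)"
        using count_alt[of "c # u" d] sets d(2) s by simp
      then have "last u \<noteq> c" using cnt False by (auto split: if_splits)
      moreover have "successively (\<noteq>) u" using s by (auto simp: successively_Cons)
      ultimately show ?thesis using False by (simp add: successively_append_iff)
    qed
  next
    assume s: "successively (\<noteq>) (u @ [c])"
    show "successively (\<noteq>) (c # u)"
    proof (cases "u = []")
      case True then show ?thesis by simp
    next
      case False
      have "hd u \<noteq> c"
      proof
        assume h: "hd u = c"
        have hd': "hd (u @ [c]) = c" using h False by simp
        have "count_list (u @ [c]) c = count_list (u @ [c]) d + (if last (u @ [c]) = c then 1 else 0)"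
          using count_alt[of "u @ [c]" d] sets d(2) s hd' by auto
        moreover have "count_list (u @ [c]) c = count_list (c # u) c"
          "count_list (u @ [c]) d = count_list (c # u) d" by auto
        ultimately show False using cnt by simp
      qed
      moreover have "successively (\<noteq>) u" using s by (simp add: successively_append_iff)
      ultimately show ?thesis using False by (simp add: successively_Cons)
    qed
  qed
qed

lemma count_filter: "Q a \<Longrightarrow> count_list (filter Q w) a = count_list w a"
  by (induction w) auto

lemma rot1_rep:
  assumes rep: "represents V E w" and un: "uniform_word k w"
  shows "represents V E (rotate1 w) \<and> uniform_word k (rotate1 w)"
proof (cases w)
  case Nil then show ?thesis using assms by simp
next
  case (Cons c r)
  have cnt: "count_list (rotate1 w) x = count_list w x" for x using Cons by auto
  have st: "set (rotate1 w) = set w" by simp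
  have alt: "alternate (r @ [c]) p q \<longleftrightarrow> alternate (c # r) p q"
    if "p \<in> set w" "q \<in> set w" "p \<noteq> q" for p q
  proof -
    let ?Q = "\<lambda>x. x = p \<or> x = q"
    show ?thesis
    proof (cases "?Q c")
      case True
      have e1: "filter ?Q (r @ [c]) = filter ?Q r @ [c]" using True by simp
      have e2: "filter ?Q (c # r) = c # filter ?Q r" using True by simp
      have cx: "count_list (c # filter ?Q r) x = count_list w x" if "?Q x" for x
        using that Cons count_filter[where Q="?Q" and a=x and w=r] by simp
      have "count_list (c # filter ?Q r) p = count_list (c # filter ?Q r) q"
        using cx[of p] cx[of q] un that(1,2) unfolding uniform_word_def by simp
      moreover have "set (c # filter ?Q r) \<subseteq> {p, q}" using True by auto
      ultimately have "successively (\<noteq>) (c # filter ?Q r) \<longleftrightarrow> successively (\<noteq>) (filter ?Q r @ [c])"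
        by (intro rot_equiv[OF _ that(3)])
      then show ?thesis using alternate_iff[OF that(3)] e1 e2 by simp
    next
      case False
      then show ?thesis unfolding alternate_def by simp
    qed
  qed
  show ?thesis using rep un Cons alt cnt st unfolding represents_def uniform_word_def by auto
qed

lemma rot_rep:
  "represents V E w \<Longrightarrow> uniform_word k w \<Longrightarrow> represents V E (rotate n w) \<and> uniform_word k (rotate n w)"
  by (induction n) (auto dest: rot1_rep)

lemma rot_hd:
  assumes "represents V E w" "uniform_word k w" "v \<in> set w"
  shows "\<exists>w'. represents V E w' \<and> uniform_word k w' \<and> w' \<noteq> [] \<and> hd w' = v"
proof -
  let ?n = "length (takeWhile (\<lambda>c. c \<noteq> v) w)"
  have lt: "?n < length w" using assms(3) by (rule length_takeWhile_less)
  have r: "rotate ?n w = drop ?n w @ take ?n w" using lt by (simp add: rotate_drop_take)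
  have d: "drop ?n w = dropWhile (\<lambda>c. c \<noteq> v) w" by (simp add: dropWhile_eq_drop)
  have dne: "dropWhile (\<lambda>c. c \<noteq> v) w \<noteq> []" using lt d by (metis drop_eq_Nil not_le)
  have "hd (dropWhile (\<lambda>c. c \<noteq> v) w) = v" using hd_dropWhile[OF dne] by simp
  then have "rotate ?n w \<noteq> [] \<and> hd (rotate ?n w) = v" using r d dne by simp
  then show ?thesis using rot_rep[OF assms(1,2)] by blast
qed

lemma restrict_rep:
  assumes rep: "represents V E w" and un: "uniform_word k w" and S: "S \<subseteq> V"
    and ed: "\<forall>a\<in>S. \<forall>b\<in>S. a \<noteq> b \<longrightarrow> ((a, b) \<in> E' \<longleftrightarrow> (a, b) \<in> E)"
  shows "represents S E' (filter (\<lambda>c. c \<in> S) w) \<and> uniform_word k (filter (\<lambda>c. c \<in> S) w)"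
proof -
  have st: "set (filter (\<lambda>c. c \<in> S) w) = S" using rep S unfolding represents_def by auto
  have alt: "alternate (filter (\<lambda>c. c \<in> S) w) a b \<longleftrightarrow> (a, b) \<in> E'"
    if "a \<in> S" "b \<in> S" "a \<noteq> b" for a b
  proof -
    have "alternate w a b \<longleftrightarrow> (a, b) \<in> E" using rep that S unfolding represents_def by blast
    then show ?thesis using alternate_filter[where S=S and w=w, OF that(1,2)] ed that by blast
  qed
  have "uniform_word k (filter (\<lambda>c. c \<in> S) w)"
    using un count_filter[where Q="\<lambda>c. c \<in> S" and w=w] unfolding uniform_word_def by auto
  then show ?thesis using st alt unfolding represents_def by blast
qed

lemma rename_rep:
  assumes inj: "inj_on f V" and rep: "represents V E w" and un: "uniform_word k w"
    and ed: "\<forall>a\<in>V. \<forall>b\<in>V. a \<noteq> b \<longrightarrow> ((f a, f b) \<in> E' \<longleftrightarrow> (a, b) \<in> E)"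
  shows "represents (f ` V) E' (map f w) \<and> uniform_word k (map f w)"
proof -
  have sw: "set w = V" using rep unfolding represents_def by simp
  have alt: "alternate (map f w) (f a) (f b) \<longleftrightarrow> alternate w a b"
    if "a \<in> V" "b \<in> V" "a \<noteq> b" for a b
  proof -
    have fab: "f a \<noteq> f b" using inj that by (meson inj_on_contraD)
    let ?u = "filter (\<lambda>c. c = a \<or> c = b) w"
    have "filter (\<lambda>c. c = f a \<or> c = f b) (map f w) = map f (filter ((\<lambda>c. c = f a \<or> c = f b) \<circ> f) w)"
      by (rule filter_map)
    also have "filter ((\<lambda>c. c = f a \<or> c = f b) \<circ> f) w = ?u"
    proof (rule filter_cong)
      fix x assume "x \<in> set w"
      then show "((\<lambda>c. c = f a \<or> c = f b) \<circ> f) x = (x = a \<or> x = b)"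
        using inj that sw by (auto simp: inj_on_eq_iff)
    qed simp
    finally have e: "filter (\<lambda>c. c = f a \<or> c = f b) (map f w) = map f ?u" .
    have "successively (\<noteq>) (map f ?u) \<longleftrightarrow> successively (\<lambda>x y. f x \<noteq> f y) ?u"
      by (rule successively_map)
    also have "\<dots> \<longleftrightarrow> successively (\<noteq>) ?u"
    proof (rule successively_cong)
      fix x y assume "x \<in> set ?u" "y \<in> set ?u"
      then show "(f x \<noteq> f y) \<longleftrightarrow> (x \<noteq> y)" using inj sw by (auto simp: inj_on_eq_iff)
    qed simp
    finally show ?thesis using alternate_iff[OF fab] alternate_iff[OF that(3)] e by simp
  qed
  have cnt: "count_list (map f w) (f a) = count_list w a" if "a \<in> set w" for a
    using count_list_inj_map[of f w a] inj sw that by simp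
  show ?thesis
  proof
    show "represents (f ` V) E' (map f w)"
      unfolding represents_def
    proof (intro conjI ballI impI)
      show "set (map f w) = f ` V" using sw by simp
    next
      fix x y assume "x \<in> f ` V" "y \<in> f ` V" "x \<noteq> y"
      then obtain a b where "a \<in> V" "b \<in> V" "x = f a" "y = f b" "a \<noteq> b" by blast
      then show "alternate (map f w) x y \<longleftrightarrow> (x, y) \<in> E'"
        using alt ed rep unfolding represents_def by auto
    qed
  next
    show "uniform_word k (map f w)" using un cnt unfolding uniform_word_def by auto
  qed
qed

lemma cong_rep:
  assumes "represents V E w" "\<forall>a\<in>V. \<forall>b\<in>V. a \<noteq> b \<longrightarrow> ((a, b) \<in> E' \<longleftrightarrow> (a, b) \<in> E)"
  shows "represents V E' w"
  using assms unfolding represents_def by auto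

lemma succ_le1:
  "set u \<subseteq> {a, b} \<Longrightarrow> count_list u a \<le> 1 \<Longrightarrow> count_list u b \<le> 1 \<Longrightarrow> successively (\<noteq>) u"
proof (induction u)
  case Nil then show ?case by simp
next
  case (Cons c r)
  have IH: "successively (\<noteq>) r" using Cons by (auto split: if_splits)
  have "r = [] \<or> hd r \<noteq> c"
  proof (cases r)
    case (Cons d r') then show ?thesis using Cons.prems by (auto split: if_splits)
  qed simp
  then show ?case using IH by (auto simp: successively_Cons)
qed

lemma krep1_complete:
  assumes "k_word_representable 1 V E"
  shows "complete_graph V E"
proof -
  obtain w where w: "uniform_word 1 w" "represents V E w"
    using assms unfolding k_word_representable_def by blast
  show ?thesis unfolding complete_graph_def
  proof (intro ballI impI)
    fix a b assume ab: "a \<in> V" "b \<in> V" "a \<noteq> b"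
    let ?u = "filter (\<lambda>c. c = a \<or> c = b) w"
    have "set w = V" using w(2) unfolding represents_def by simp
    then have "count_list ?u a \<le> 1" "count_list ?u b \<le> 1"
      using w(1) ab count_filter[where Q="\<lambda>c. c = a \<or> c = b" and a=a and w=w] count_filter[where Q="\<lambda>c. c = a \<or> c = b" and a=b and w=w]
      unfolding uniform_word_def by auto
    then have "successively (\<noteq>) ?u" by (intro succ_le1[of _ a b]) auto
    then have "alternate w a b" using alternate_iff[OF ab(3)] by simp
    then show "(a, b) \<in> E" using w(2) ab unfolding represents_def by auto
  qed
qed

lemma krep_pos:
  assumes "k_word_representable k V E" "V \<noteq> {}" shows "k \<ge> 1"
proof -
  obtain w where w: "uniform_word k w" "represents V E w"
    using assms(1) unfolding k_word_representable_def by blast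
  have "set w \<noteq> {}" using w(2) assms(2) unfolding represents_def by auto
  then obtain a where "a \<in> set w" by (meson equals0I)
  then have "count_list w a \<noteq> 0" by (simp add: count_list_0_iff)
  then show ?thesis using w(1) \<open>a \<in> set w\<close> unfolding uniform_word_def by auto
qed

lemma rep_num_eq:
  "k_word_representable n V E \<Longrightarrow> (\<And>m. k_word_representable m V E \<Longrightarrow> n \<le> m) \<Longrightarrow> rep_num V E = n"
  unfolding rep_num_def by (rule Least_equality)

lemma rep_num_props:
  assumes "\<exists>k. k_word_representable k V E"
  shows "k_word_representable (rep_num V E) V E" "\<And>m. k_word_representable m V E \<Longrightarrow> rep_num V E \<le> m"
  using assms unfolding rep_num_def by (auto intro: LeastI_ex Least_le)


lemma decomp:
  "w \<noteq> [] \<Longrightarrow> hd w = v \<Longrightarrow> \<exists>As. w = concat (map ((#) v) As) \<and> (\<forall>A\<in>set As. v \<notin> set A)"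
proof (induction "length w" arbitrary: w rule: less_induct)
  case less
  obtain r where w: "w = v # r" using less.prems by (cases w) auto
  define t where "t = takeWhile (\<lambda>c. c \<noteq> v) r"
  define d where "d = dropWhile (\<lambda>c. c \<noteq> v) r"
  have r: "r = t @ d" unfolding t_def d_def by simp
  have tv: "v \<notin> set t" unfolding t_def by (auto dest: set_takeWhileD)
  show ?case
  proof (cases "d = []")
    case True
    then have "w = concat (map ((#) v) [t])" using w r by simp
    then show ?thesis using tv by (intro exI[of _ "[t]"]) simp
  next
    case False
    have hd: "hd d = v" using hd_dropWhile[OF False[unfolded d_def]] unfolding d_def by simp
    have "length d < length w" using w r by simp
    from less.hyps[OF this False hd] obtain As where
      As: "d = concat (map ((#) v) As)" "\<forall>A\<in>set As. v \<notin> set A" by blast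
    have "w = concat (map ((#) v) (t # As))" using w r As(1) by simp
    then show ?thesis using tv As(2) by (intro exI[of _ "t # As"]) simp
  qed
qed

lemma count_concat_v: "\<forall>A\<in>set As. v \<notin> set A \<Longrightarrow> count_list (concat (map ((#) v) As)) v = length As"
  by (induction As) auto

lemma count_concat_a: "a \<noteq> v \<Longrightarrow> count_list (concat (map ((#) v) As)) a = sum_list (map (\<lambda>A. count_list A a) As)"
  by (induction As) auto

fun mix :: "'a \<Rightarrow> 'a list list \<Rightarrow> 'a list list \<Rightarrow> 'a list" where
  "mix v (A # As) (B # Bs) = v # A @ B @ mix v As Bs"
| "mix v _ _ = []"

lemma filter_mix1:
  "length As = length Bs \<Longrightarrow> P v \<Longrightarrow> \<forall>A\<in>set As. \<forall>c\<in>set A. P c \<Longrightarrow> \<forall>B\<in>set Bs. \<forall>c\<in>set B. \<not> P c \<Longrightarrow>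
   filter P (mix v As Bs) = concat (map ((#) v) As)"
proof (induction As arbitrary: Bs)
  case Nil then show ?case by simp
next
  case (Cons A As)
  then obtain B Bs' where "Bs = B # Bs'" by (cases Bs) auto
  with Cons show ?case by (auto simp: filter_empty_conv)
qed

lemma filter_mix2:
  "length As = length Bs \<Longrightarrow> P v \<Longrightarrow> \<forall>A\<in>set As. \<forall>c\<in>set A. \<not> P c \<Longrightarrow> \<forall>B\<in>set Bs. \<forall>c\<in>set B. P c \<Longrightarrow>
   filter P (mix v As Bs) = concat (map ((#) v) Bs)"
proof (induction As arbitrary: Bs)
  case Nil then show ?case by simp
next
  case (Cons A As)
  then obtain B Bs' where "Bs = B # Bs'" by (cases Bs) auto
  with Cons show ?case by (auto simp: filter_empty_conv)
qed

lemma set_mix: "set (mix v As Bs) \<subseteq> {v} \<union> \<Union>(set ` set As) \<union> \<Union>(set ` set Bs)"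
  by (induction v As Bs rule: mix.induct) auto

lemma filter_only_a: "b \<notin> set A \<Longrightarrow> filter (\<lambda>c. c = a \<or> c = b) A = replicate (count_list A a) a"
  by (induction A) auto

lemma filter_only_b: "\<forall>c\<in>set B. c \<noteq> a \<Longrightarrow> filter (\<lambda>c. c = a \<or> c = b) B = replicate (count_list B b) b"
  by (induction B) auto

lemma succ_replicate: "successively (\<noteq>) (replicate n a) \<Longrightarrow> n \<le> 1"
proof (induction n)
  case (Suc n) then show ?case by (cases n) auto
qed simp

lemma succ_mid: "successively P (xs @ ys @ zs) \<Longrightarrow> successively P ys"
  by (simp add: successively_append_iff)

lemma mix_counts:
  "length As = length Bs \<Longrightarrow> \<forall>A\<in>set As. b \<notin> set A \<Longrightarrow> \<forall>B\<in>set Bs. a \<notin> set B \<Longrightarrow>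
   successively (\<noteq>) (filter (\<lambda>c. c = a \<or> c = b) (mix v As Bs)) \<Longrightarrow>
   \<forall>A\<in>set As. count_list A a \<le> 1"
proof (induction As arbitrary: Bs)
  case Nil then show ?case by simp
next
  case (Cons A As)
  then obtain B Bs' where B: "Bs = B # Bs'" by (cases Bs) auto
  let ?Q = "\<lambda>c. c = a \<or> c = b"
  have e: "filter ?Q (mix v (A # As) Bs) = filter ?Q [v] @ replicate (count_list A a) a @
      (filter ?Q B @ filter ?Q (mix v As Bs'))"
    using B Cons.prems(2) filter_only_a[of b A a] by simp
  have s0: "successively (\<noteq>) (filter ?Q [v] @ replicate (count_list A a) a @
      (filter ?Q B @ filter ?Q (mix v As Bs')))"
    using Cons.prems(4) e by simp
  have s: "successively (\<noteq>) (filter ?Q (mix v As Bs'))"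
    using s0 by (simp only: successively_append_iff)
  have "count_list A a \<le> 1" using succ_replicate[OF succ_mid[OF s0]] .
  moreover have "\<forall>A\<in>set As. count_list A a \<le> 1" using Cons.IH[of Bs'] Cons.prems B s by auto
  ultimately show ?case by simp
qed

lemma sum_le_length: "\<forall>A\<in>set As. f A \<le> (1::nat) \<Longrightarrow> sum_list (map f As) \<le> length As"
  by (induction As) auto


lemma glue:
  assumes r1: "represents V1 E1 w1" and u1: "uniform_word m w1"
    and r2: "represents V2 E2 w2" and u2: "uniform_word m w2"
    and m2: "m \<ge> 2" and int: "V1 \<inter> V2 = {v}"
    and e1: "\<forall>a\<in>V1. \<forall>b\<in>V1. a \<noteq> b \<longrightarrow> ((a, b) \<in> E \<longleftrightarrow> (a, b) \<in> E1)"
    and e2: "\<forall>a\<in>V2. \<forall>b\<in>V2. a \<noteq> b \<longrightarrow> ((a, b) \<in> E \<longleftrightarrow> (a, b) \<in> E2)"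
    and cross: "\<forall>a\<in>V1 - {v}. \<forall>b\<in>V2 - {v}. (a, b) \<notin> E \<and> (b, a) \<notin> E"
  shows "k_word_representable m (V1 \<union> V2) E"
proof -
  have vV1: "v \<in> set w1" using r1 int unfolding represents_def by auto
  have vV2: "v \<in> set w2" using r2 int unfolding represents_def by auto
  obtain x1 where x1: "represents V1 E1 x1" "uniform_word m x1" "x1 \<noteq> []" "hd x1 = v"
    using rot_hd[OF r1 u1 vV1] by blast
  obtain x2 where x2: "represents V2 E2 x2" "uniform_word m x2" "x2 \<noteq> []" "hd x2 = v"
    using rot_hd[OF r2 u2 vV2] by blast
  have s1: "set x1 = V1" using x1(1) unfolding represents_def by simp
  have s2: "set x2 = V2" using x2(1) unfolding represents_def by simp
  obtain As where As: "x1 = concat (map ((#) v) As)" "\<forall>A\<in>set As. v \<notin> set A"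
    using decomp[OF x1(3,4)] by blast
  obtain Bs where Bs: "x2 = concat (map ((#) v) Bs)" "\<forall>B\<in>set Bs. v \<notin> set B"
    using decomp[OF x2(3,4)] by blast
  have vin1: "v \<in> V1" "v \<in> V2" using int by auto
  have lA: "length As = m" using count_concat_v[OF As(2)] As(1) x1(2) s1 vin1
    unfolding uniform_word_def by simp
  have lB: "length Bs = m" using count_concat_v[OF Bs(2)] Bs(1) x2(2) s2 vin1
    unfolding uniform_word_def by simp
  obtain A1 A2 As'' where AA: "As = A1 # A2 # As''" using lA m2
    by (metis Suc_le_length_iff numeral_2_eq_2)
  obtain B1 B2 Bs'' where BB: "Bs = B1 # B2 # Bs''" using lB m2
    by (metis Suc_le_length_iff numeral_2_eq_2)
  have lAB: "length (A2 # As'') = length (B2 # Bs'')" using AA BB lA lB by simp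
  have Asub: "\<forall>A\<in>set As. \<forall>c\<in>set A. c \<in> V1 \<and> c \<noteq> v" using As s1 by auto
  have Bsub: "\<forall>B\<in>set Bs. \<forall>c\<in>set B. c \<in> V2 \<and> c \<noteq> v" using Bs s2 by auto
  have Anot2: "\<forall>A\<in>set As. \<forall>c\<in>set A. c \<notin> V2" using Asub int by blast
  have Bnot1: "\<forall>B\<in>set Bs. \<forall>c\<in>set B. c \<notin> V1" using Bsub int by blast
  define W where "W = v # B1 @ A1 @ mix v (A2 # As'') (B2 # Bs'')"
  have f1: "filter (\<lambda>c. c \<in> V1) W = x1"
  proof -
    have "filter (\<lambda>c. c \<in> V1) (mix v (A2 # As'') (B2 # Bs'')) = concat (map ((#) v) (A2 # As''))"
      using filter_mix1[OF lAB, of "\<lambda>c. c \<in> V1"] vin1 Asub Bnot1 AA BB by simp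
    moreover have "filter (\<lambda>c. c \<in> V1) B1 = []" using Bnot1 BB by (auto simp: filter_empty_conv)
    moreover have "filter (\<lambda>c. c \<in> V1) A1 = A1" using Asub AA by auto
    ultimately show ?thesis unfolding W_def using As(1) AA vin1 by simp
  qed
  have f2: "filter (\<lambda>c. c \<in> V2) W = x2"
  proof -
    have "filter (\<lambda>c. c \<in> V2) (mix v (A2 # As'') (B2 # Bs'')) = concat (map ((#) v) (B2 # Bs''))"
      using filter_mix2[OF lAB, of "\<lambda>c. c \<in> V2"] vin1 Bsub Anot2 AA BB by simp
    moreover have "filter (\<lambda>c. c \<in> V2) A1 = []" using Anot2 AA by (auto simp: filter_empty_conv)
    moreover have "filter (\<lambda>c. c \<in> V2) B1 = B1" using Bsub BB by auto
    ultimately show ?thesis unfolding W_def using Bs(1) BB vin1 by simp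
  qed
  have setW: "set W \<subseteq> V1 \<union> V2"
  proof -
    have "set (mix v (A2 # As'') (B2 # Bs'')) \<subseteq> {v} \<union> \<Union>(set ` set (A2 # As'')) \<union> \<Union>(set ` set (B2 # Bs''))"
      by (rule set_mix)
    then show ?thesis unfolding W_def using Asub Bsub AA BB vin1 by fastforce
  qed
  have setW': "set W = V1 \<union> V2"
  proof
    show "V1 \<union> V2 \<subseteq> set W"
    proof
      fix c assume "c \<in> V1 \<union> V2"
      then show "c \<in> set W"
      proof
        assume "c \<in> V1" then have "c \<in> set (filter (\<lambda>c. c \<in> V1) W)" using f1 s1 by simp
        then show ?thesis by simp
      next
        assume "c \<in> V2" then have "c \<in> set (filter (\<lambda>c. c \<in> V2) W)" using f2 s2 by simp
        then show ?thesis by simp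
      qed
    qed
  qed (rule setW)
  have cntW: "count_list W c = m" if "c \<in> set W" for c
  proof -
    have "c \<in> V1 \<or> c \<in> V2" using that setW by auto
    then show ?thesis
    proof
      assume c: "c \<in> V1"
      have "count_list W c = count_list (filter (\<lambda>c. c \<in> V1) W) c" using count_filter[where Q="\<lambda>c. c \<in> V1" and a=c and w=W] c by simp
      then show ?thesis using f1 x1(2) s1 c unfolding uniform_word_def by simp
    next
      assume c: "c \<in> V2"
      have "count_list W c = count_list (filter (\<lambda>c. c \<in> V2) W) c" using count_filter[where Q="\<lambda>c. c \<in> V2" and a=c and w=W] c by simp
      then show ?thesis using f2 x2(2) s2 c unfolding uniform_word_def by simp
    qed
  qed
  have noalt: "\<not> alternate W a b" if ab: "a \<in> V1 - {v}" "b \<in> V2 - {v}" for a b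
  proof
    assume alt: "alternate W a b"
    have anb: "a \<noteq> b" using ab int by auto
    let ?Q = "\<lambda>c. c = a \<or> c = b"
    have sW: "successively (\<noteq>) (filter ?Q W)" using alt alternate_iff[OF anb] by simp
    have bA: "\<forall>A\<in>set As. b \<notin> set A" using Asub ab int by blast
    have aB: "\<forall>B\<in>set Bs. a \<notin> set B" using Bsub ab int by blast
    have eqW: "filter ?Q W = filter ?Q B1 @ replicate (count_list A1 a + count_list A2 a) a @
        (filter ?Q B2 @ filter ?Q (mix v As'' Bs''))"
      unfolding W_def using ab filter_only_a[of b A1 a] filter_only_a[of b A2 a] bA AA
      by (auto simp: replicate_add)
    have s12: "count_list A1 a + count_list A2 a \<le> 1"
      using succ_replicate[OF succ_mid[OF sW[unfolded eqW]]] .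
    have sR: "successively (\<noteq>) (filter ?Q (mix v As'' Bs''))"
      using sW[unfolded eqW] by (simp only: successively_append_iff)
    have lAB'': "length As'' = length Bs''" using lAB by simp
    have "\<forall>A\<in>set As''. count_list A a \<le> 1"
      using mix_counts[OF lAB'' _ _ sR] bA aB AA BB by auto
    then have "sum_list (map (\<lambda>A. count_list A a) As'') \<le> length As''" by (rule sum_le_length)
    moreover have "count_list x1 a = count_list A1 a + count_list A2 a + sum_list (map (\<lambda>A. count_list A a) As'')"
    proof -
      have "a \<noteq> v" using ab by simp
      then show ?thesis using count_concat_a[of a v As] As(1) AA by simp
    qed
    moreover have "count_list x1 a = m" using x1(2) s1 ab unfolding uniform_word_def by simp
    moreover have "length As'' = m - 2" using lA AA by simp
    ultimately show False using s12 m2 by linarith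
  qed
  have "represents (V1 \<union> V2) E W"
    unfolding represents_def
  proof (intro conjI ballI impI)
    show "set W = V1 \<union> V2" by (rule setW')
  next
    fix p q assume p: "p \<in> V1 \<union> V2" and q: "q \<in> V1 \<union> V2" and pq: "p \<noteq> q"
    show "alternate W p q \<longleftrightarrow> (p, q) \<in> E"
    proof (cases "p \<in> V1 \<and> q \<in> V1")
      case True
      have "alternate W p q \<longleftrightarrow> alternate x1 p q"
        using alternate_filter[where S=V1 and w=W] True f1 by metis
      then show ?thesis using x1(1) True pq e1 unfolding represents_def by auto
    next
      case F1: False
      show ?thesis
      proof (cases "p \<in> V2 \<and> q \<in> V2")
        case True
        have "alternate W p q \<longleftrightarrow> alternate x2 p q"
          using alternate_filter[where S=V2 and w=W] True f2 by metis
        then show ?thesis using x2(1) True pq e2 unfolding represents_def by auto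
      next
        case False
        then have "(p \<in> V1 - {v} \<and> q \<in> V2 - {v}) \<or> (q \<in> V1 - {v} \<and> p \<in> V2 - {v})"
          using F1 p q int by blast
        then show ?thesis using noalt alternate_sym cross by metis
      qed
    qed
  qed
  moreover have "uniform_word m W" using cntW unfolding uniform_word_def by blast
  ultimately show ?thesis unfolding k_word_representable_def by blast
qed


lemma glue_k:
  assumes "k_word_representable m V1 E1" "k_word_representable m V2 E2"
    and "m \<ge> 2" and "V1 \<inter> V2 = {v}"
    and "\<forall>a\<in>V1. \<forall>b\<in>V1. a \<noteq> b \<longrightarrow> ((a, b) \<in> E \<longleftrightarrow> (a, b) \<in> E1)"
    and "\<forall>a\<in>V2. \<forall>b\<in>V2. a \<noteq> b \<longrightarrow> ((a, b) \<in> E \<longleftrightarrow> (a, b) \<in> E2)"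
    and "\<forall>a\<in>V1 - {v}. \<forall>b\<in>V2 - {v}. (a, b) \<notin> E \<and> (b, a) \<notin> E"
  shows "k_word_representable m (V1 \<union> V2) E"
proof -
  obtain w1 where "uniform_word m w1" "represents V1 E1 w1" using assms(1) unfolding k_word_representable_def by blast
  moreover obtain w2 where "uniform_word m w2" "represents V2 E2 w2" using assms(2) unfolding k_word_representable_def by blast
  ultimately show ?thesis using glue[OF _ _ _ _ assms(3-7)] by blast
qed

lemma single_krep: "k_word_representable 1 {a} E"
  unfolding k_word_representable_def represents_def uniform_word_def
  by (rule exI[of _ "[a]"]) simp

lemma restrict_k:
  assumes "k_word_representable m V E" "S \<subseteq> V"
    "\<forall>a\<in>S. \<forall>b\<in>S. a \<noteq> b \<longrightarrow> ((a, b) \<in> E' \<longleftrightarrow> (a, b) \<in> E)"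
  shows "k_word_representable m S E'"
proof -
  obtain w where "uniform_word m w" "represents V E w" using assms(1) unfolding k_word_representable_def by blast
  then show ?thesis using restrict_rep[OF _ _ assms(2,3)] unfolding k_word_representable_def by blast
qed

lemma rename_k:
  assumes "inj_on f V" "k_word_representable m V E"
    "\<forall>a\<in>V. \<forall>b\<in>V. a \<noteq> b \<longrightarrow> ((f a, f b) \<in> E' \<longleftrightarrow> (a, b) \<in> E)"
  shows "k_word_representable m (f ` V) E'"
proof -
  obtain w where "uniform_word m w" "represents V E w" using assms(2) unfolding k_word_representable_def by blast
  then show ?thesis using rename_rep[OF assms(1) _ _ assms(3)] unfolding k_word_representable_def by blast
qed

context
  fixes V1 V2 :: "'a set" and E1 E2 :: "('a \<times> 'a) set" and x y z :: 'a
  assumes g1: "simple_graph V1 E1" and g2: "simple_graph V2 E2"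
    and dis: "V1 \<inter> V2 = {}" and xV: "x \<in> V1" and yV: "y \<in> V2"
    and zV: "z \<notin> (V1 - {x}) \<union> (V2 - {y})"
begin

definition "f1 = (\<lambda>v. if v = x then z else v)"
definition "f2 = (\<lambda>v. if v = y then z else v)"

lemma E1sub: "E1 \<subseteq> V1 \<times> V1" using g1 unfolding simple_graph_def by simp
lemma E2sub: "E2 \<subseteq> V2 \<times> V2" using g2 unfolding simple_graph_def by simp

lemma inj1: "inj_on f1 V1" unfolding inj_on_def f1_def using zV by auto
lemma inj2: "inj_on f2 V2" unfolding inj_on_def f2_def using zV by auto

lemma img1: "f1 ` V1 = (V1 - {x}) \<union> {z}" unfolding f1_def using xV by auto
lemma img2: "f2 ` V2 = (V2 - {y}) \<union> {z}" unfolding f2_def using yV by auto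

lemma mg1: "a \<in> V1 \<Longrightarrow> merge_vx x y z a = f1 a"
  unfolding merge_vx_def f1_def using dis yV by auto
lemma mg2: "a \<in> V2 \<Longrightarrow> merge_vx x y z a = f2 a"
  unfolding merge_vx_def f2_def using dis xV by auto

lemma identV: "ident_V V1 V2 x y z = f1 ` V1 \<union> f2 ` V2"
  unfolding ident_V_def img1 img2 by auto

lemma int12: "f1 ` V1 \<inter> f2 ` V2 = {z}"
  unfolding img1 img2 using dis zV by auto

lemma memE: "(p, q) \<in> ident_E E1 E2 x y z \<longleftrightarrow>
   (\<exists>a b. (a, b) \<in> E1 \<and> p = f1 a \<and> q = f1 b) \<or> (\<exists>a b. (a, b) \<in> E2 \<and> p = f2 a \<and> q = f2 b)"
proof -
  let ?R = "(\<exists>a b. (a, b) \<in> E1 \<and> p = f1 a \<and> q = f1 b) \<or> (\<exists>a b. (a, b) \<in> E2 \<and> p = f2 a \<and> q = f2 b)"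
  have "(p, q) \<in> ident_E E1 E2 x y z \<longleftrightarrow> (\<exists>a b. (a, b) \<in> E1 \<union> E2 \<and> p = merge_vx x y z a \<and> q = merge_vx x y z b)"
    unfolding ident_E_def by auto
  also have "\<dots> \<longleftrightarrow> ?R"
  proof
    assume "\<exists>a b. (a, b) \<in> E1 \<union> E2 \<and> p = merge_vx x y z a \<and> q = merge_vx x y z b"
    then obtain a b where ab: "(a, b) \<in> E1 \<union> E2" "p = merge_vx x y z a" "q = merge_vx x y z b" by blast
    show ?R
    proof (cases "(a, b) \<in> E1")
      case True
      then have "a \<in> V1" "b \<in> V1" using E1sub by auto
      then show ?R using ab True mg1 by blast
    next
      case False
      then have "(a, b) \<in> E2" using ab by blast
      moreover from this have "a \<in> V2" "b \<in> V2" using E2sub by auto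
      ultimately show ?R using ab mg2 by blast
    qed
  next
    assume ?R
    then show "\<exists>a b. (a, b) \<in> E1 \<union> E2 \<and> p = merge_vx x y z a \<and> q = merge_vx x y z b"
    proof
      assume "\<exists>a b. (a, b) \<in> E1 \<and> p = f1 a \<and> q = f1 b"
      then obtain a b where "(a, b) \<in> E1" "p = f1 a" "q = f1 b" by blast
      moreover then have "a \<in> V1" "b \<in> V1" using E1sub by auto
      ultimately show ?thesis using mg1 by (metis UnI1)
    next
      assume "\<exists>a b. (a, b) \<in> E2 \<and> p = f2 a \<and> q = f2 b"
      then obtain a b where "(a, b) \<in> E2" "p = f2 a" "q = f2 b" by blast
      moreover then have "a \<in> V2" "b \<in> V2" using E2sub by auto
      ultimately show ?thesis using mg2 by (metis UnI2)
    qed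
  qed
  finally show ?thesis .
qed

lemma edge1: "\<forall>a\<in>V1. \<forall>b\<in>V1. a \<noteq> b \<longrightarrow> ((f1 a, f1 b) \<in> ident_E E1 E2 x y z \<longleftrightarrow> (a, b) \<in> E1)"
proof (intro ballI impI)
  fix a b assume ab: "a \<in> V1" "b \<in> V1" "a \<noteq> b"
  show "(f1 a, f1 b) \<in> ident_E E1 E2 x y z \<longleftrightarrow> (a, b) \<in> E1"
  proof
    assume "(f1 a, f1 b) \<in> ident_E E1 E2 x y z"
    then consider (A) c d where "(c, d) \<in> E1" "f1 a = f1 c" "f1 b = f1 d"
      | (B) c d where "(c, d) \<in> E2" "f1 a = f2 c" "f1 b = f2 d"
      unfolding memE by blast
    then show "(a, b) \<in> E1"
    proof cases
      case A
      then have "c \<in> V1" "d \<in> V1" using E1sub by auto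
      then have "a = c" "b = d" using A inj1 ab by (auto dest: inj_onD)
      then show ?thesis using A by simp
    next
      case B
      then have "c \<in> V2" "d \<in> V2" using E2sub by auto
      then have "f2 c \<in> f2 ` V2" "f2 d \<in> f2 ` V2" by auto
      moreover have "f1 a \<in> f1 ` V1" "f1 b \<in> f1 ` V1" using ab by auto
      ultimately have "f1 a \<in> f1 ` V1 \<inter> f2 ` V2" "f1 b \<in> f1 ` V1 \<inter> f2 ` V2" using B by auto
      then have "f1 a = f1 b" using int12 by auto
      then show ?thesis using inj1 ab by (auto dest: inj_onD)
    qed
  next
    assume "(a, b) \<in> E1" then show "(f1 a, f1 b) \<in> ident_E E1 E2 x y z" unfolding memE by blast
  qed
qed

lemma edge2: "\<forall>a\<in>V2. \<forall>b\<in>V2. a \<noteq> b \<longrightarrow> ((f2 a, f2 b) \<in> ident_E E1 E2 x y z \<longleftrightarrow> (a, b) \<in> E2)"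
proof (intro ballI impI)
  fix a b assume ab: "a \<in> V2" "b \<in> V2" "a \<noteq> b"
  show "(f2 a, f2 b) \<in> ident_E E1 E2 x y z \<longleftrightarrow> (a, b) \<in> E2"
  proof
    assume "(f2 a, f2 b) \<in> ident_E E1 E2 x y z"
    then consider (A) c d where "(c, d) \<in> E1" "f2 a = f1 c" "f2 b = f1 d"
      | (B) c d where "(c, d) \<in> E2" "f2 a = f2 c" "f2 b = f2 d"
      unfolding memE by blast
    then show "(a, b) \<in> E2"
    proof cases
      case B
      then have "c \<in> V2" "d \<in> V2" using E2sub by auto
      then have "a = c" "b = d" using B inj2 ab by (auto dest: inj_onD)
      then show ?thesis using B by simp
    next
      case A
      then have "c \<in> V1" "d \<in> V1" using E1sub by auto
      then have "f1 c \<in> f1 ` V1" "f1 d \<in> f1 ` V1" by auto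
      moreover have "f2 a \<in> f2 ` V2" "f2 b \<in> f2 ` V2" using ab by auto
      ultimately have "f2 a \<in> f1 ` V1 \<inter> f2 ` V2" "f2 b \<in> f1 ` V1 \<inter> f2 ` V2" using A by auto
      then have "f2 a = f2 b" using int12 by auto
      then show ?thesis using inj2 ab by (auto dest: inj_onD)
    qed
  next
    assume "(a, b) \<in> E2" then show "(f2 a, f2 b) \<in> ident_E E1 E2 x y z" unfolding memE by blast
  qed
qed

lemma crossE: "\<forall>p\<in>f1 ` V1 - {z}. \<forall>q\<in>f2 ` V2 - {z}.
   (p, q) \<notin> ident_E E1 E2 x y z \<and> (q, p) \<notin> ident_E E1 E2 x y z"
proof (intro ballI)
  fix p q assume p: "p \<in> f1 ` V1 - {z}" and q: "q \<in> f2 ` V2 - {z}"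
  have pn: "p \<notin> f2 ` V2" using p int12 by auto
  have qn: "q \<notin> f1 ` V1" using q int12 by auto
  show "(p, q) \<notin> ident_E E1 E2 x y z \<and> (q, p) \<notin> ident_E E1 E2 x y z"
  proof
    show "(p, q) \<notin> ident_E E1 E2 x y z"
    proof
      assume "(p, q) \<in> ident_E E1 E2 x y z"
      then consider (A) a b where "(a, b) \<in> E1" "p = f1 a" "q = f1 b"
        | (B) a b where "(a, b) \<in> E2" "p = f2 a" "q = f2 b" unfolding memE by blast
      then show False
      proof cases
        case A then have "b \<in> V1" using E1sub by auto
        then show False using A qn by blast
      next
        case B then have "a \<in> V2" using E2sub by auto
        then show False using B pn by blast
      qed
    qed
  next
    show "(q, p) \<notin> ident_E E1 E2 x y z"
    proof
      assume "(q, p) \<in> ident_E E1 E2 x y z"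
      then consider (A) a b where "(a, b) \<in> E1" "q = f1 a" "p = f1 b"
        | (B) a b where "(a, b) \<in> E2" "q = f2 a" "p = f2 b" unfolding memE by blast
      then show False
      proof cases
        case A then have "a \<in> V1" using E1sub by auto
        then show False using A qn by blast
      next
        case B then have "b \<in> V2" using E2sub by auto
        then show False using B pn by blast
      qed
    qed
  qed
qed

lemma UB_ident:
  assumes "k_word_representable m V1 E1" "k_word_representable m V2 E2" "m \<ge> 2"
  shows "k_word_representable m (ident_V V1 V2 x y z) (ident_E E1 E2 x y z)"
proof -
  have r1: "k_word_representable m (f1 ` V1) (ident_E E1 E2 x y z)"
    by (rule rename_k[OF inj1 assms(1) edge1])
  have r2: "k_word_representable m (f2 ` V2) (ident_E E1 E2 x y z)"
    by (rule rename_k[OF inj2 assms(2) edge2])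
  show ?thesis unfolding identV
    by (rule glue_k[OF r1 r2 assms(3) int12 _ _ crossE]) auto
qed

lemma UB_ident_single1:
  assumes "card V1 = 1" "k_word_representable m V2 E2"
  shows "k_word_representable m (ident_V V1 V2 x y z) (ident_E E1 E2 x y z)"
proof -
  have "V1 = {x}" using assms(1) xV by (metis card_1_singletonE singletonD)
  then have "ident_V V1 V2 x y z = f2 ` V2" unfolding identV using img1 img2 by auto
  then show ?thesis using rename_k[OF inj2 assms(2) edge2] by simp
qed

lemma UB_ident_single2:
  assumes "card V2 = 1" "k_word_representable m V1 E1"
  shows "k_word_representable m (ident_V V1 V2 x y z) (ident_E E1 E2 x y z)"
proof -
  have "V2 = {y}" using assms(1) yV by (metis card_1_singletonE singletonD)
  then have "ident_V V1 V2 x y z = f1 ` V1" unfolding identV using img1 img2 by auto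
  then show ?thesis using rename_k[OF inj1 assms(2) edge1] by simp
qed

definition "g1f = (\<lambda>v. if v = z then x else v)"
definition "g2f = (\<lambda>v. if v = z then y else v)"

lemma LB_ident1:
  assumes "k_word_representable m (ident_V V1 V2 x y z) (ident_E E1 E2 x y z)"
  shows "k_word_representable m V1 E1"
proof -
  have "k_word_representable m (f1 ` V1) (ident_E E1 E2 x y z)"
    by (rule restrict_k[OF assms]) (auto simp: identV)
  moreover have gf: "g1f (f1 a) = a" if "a \<in> V1" for a
    using that zV unfolding g1f_def f1_def by auto
  moreover have "inj_on g1f (f1 ` V1)"
    by (rule inj_onI) (use gf in auto)
  moreover have "g1f ` (f1 ` V1) = V1" using gf by (force simp: image_image)
  moreover have "\<forall>c\<in>f1 ` V1. \<forall>d\<in>f1 ` V1. c \<noteq> d \<longrightarrow> ((g1f c, g1f d) \<in> E1 \<longleftrightarrow> (c, d) \<in> ident_E E1 E2 x y z)"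
  proof (intro ballI impI)
    fix c d assume c: "c \<in> f1 ` V1" and d: "d \<in> f1 ` V1" and cd: "c \<noteq> d"
    then obtain a b where ab: "a \<in> V1" "b \<in> V1" "c = f1 a" "d = f1 b" by blast
    then have "a \<noteq> b" using cd by blast
    then show "(g1f c, g1f d) \<in> E1 \<longleftrightarrow> (c, d) \<in> ident_E E1 E2 x y z"
      using edge1 ab gf by simp
  qed
  ultimately show ?thesis using rename_k[of g1f "f1 ` V1" m "ident_E E1 E2 x y z" E1] by simp
qed

lemma LB_ident2:
  assumes "k_word_representable m (ident_V V1 V2 x y z) (ident_E E1 E2 x y z)"
  shows "k_word_representable m V2 E2"
proof -
  have "k_word_representable m (f2 ` V2) (ident_E E1 E2 x y z)"
    by (rule restrict_k[OF assms]) (auto simp: identV)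
  moreover have gf: "g2f (f2 a) = a" if "a \<in> V2" for a
    using that zV unfolding g2f_def f2_def by auto
  moreover have "inj_on g2f (f2 ` V2)"
    by (rule inj_onI) (use gf in auto)
  moreover have "g2f ` (f2 ` V2) = V2" using gf by (force simp: image_image)
  moreover have "\<forall>c\<in>f2 ` V2. \<forall>d\<in>f2 ` V2. c \<noteq> d \<longrightarrow> ((g2f c, g2f d) \<in> E2 \<longleftrightarrow> (c, d) \<in> ident_E E1 E2 x y z)"
  proof (intro ballI impI)
    fix c d assume c: "c \<in> f2 ` V2" and d: "d \<in> f2 ` V2" and cd: "c \<noteq> d"
    then obtain a b where ab: "a \<in> V2" "b \<in> V2" "c = f2 a" "d = f2 b" by blast
    then have "a \<noteq> b" using cd by blast
    then show "(g2f c, g2f d) \<in> E2 \<longleftrightarrow> (c, d) \<in> ident_E E1 E2 x y z"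
      using edge2 ab gf by simp
  qed
  ultimately show ?thesis using rename_k[of g2f "f2 ` V2" m "ident_E E1 E2 x y z" E2] by simp
qed


lemma xy: "x \<noteq> y" using dis xV yV by auto
lemma yn1: "y \<notin> V1" using dis yV by auto
lemma xn2: "x \<notin> V2" using dis xV by auto

lemma bE_V1: "\<forall>a\<in>V1. \<forall>b\<in>V1. a \<noteq> b \<longrightarrow> ((a, b) \<in> bridge_E E1 E2 x y \<longleftrightarrow> (a, b) \<in> E1)"
  unfolding bridge_E_def using E2sub dis yn1 by auto

lemma bE_V2: "\<forall>a\<in>V2. \<forall>b\<in>V2. a \<noteq> b \<longrightarrow> ((a, b) \<in> bridge_E E1 E2 x y \<longleftrightarrow> (a, b) \<in> E2)"
  unfolding bridge_E_def using E1sub dis xn2 by auto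

lemma K2: "k_word_representable 1 {x, y} (bridge_E E1 E2 x y)"
proof -
  have alt: "alternate [x, y] x y" using alternate_iff[OF xy] xy by simp
  have alt2: "alternate [x, y] y x" using alt alternate_sym[of "[x, y]" x y] by simp
  have "represents {x, y} (bridge_E E1 E2 x y) [x, y]"
    unfolding represents_def
  proof (intro conjI ballI impI)
    fix p q assume "p \<in> {x, y}" "q \<in> {x, y}" "p \<noteq> q"
    then have "(p = x \<and> q = y) \<or> (p = y \<and> q = x)" by auto
    then show "alternate [x, y] p q \<longleftrightarrow> (p, q) \<in> bridge_E E1 E2 x y"
      using alt alt2 unfolding bridge_E_def by auto
  qed simp
  moreover have "uniform_word 1 [x, y]" using xy unfolding uniform_word_def by auto
  ultimately show ?thesis unfolding k_word_representable_def by blast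
qed

lemma UB_bridge:
  assumes "k_word_representable m V1 E1" "k_word_representable m V2 E2" "m \<ge> 2"
  shows "k_word_representable m (bridge_V V1 V2) (bridge_E E1 E2 x y)"
proof -
  let ?E = "bridge_E E1 E2 x y"
  have r1: "k_word_representable m V1 ?E"
    by (rule restrict_k[OF assms(1) subset_refl]) (use bE_V1 in blast)
  have r2: "k_word_representable m V2 ?E"
    by (rule restrict_k[OF assms(2) subset_refl]) (use bE_V2 in blast)
  have rk: "k_word_representable m {x, y} ?E"
    by (rule krep_raise[OF K2]) (use assms(3) in auto)
  have i1: "V1 \<inter> {x, y} = {x}" using xV yn1 by auto
  have c1: "\<forall>a\<in>V1 - {x}. \<forall>b\<in>{x, y} - {x}. (a, b) \<notin> ?E \<and> (b, a) \<notin> ?E"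
    unfolding bridge_E_def using E1sub E2sub dis yn1 xy by auto
  have g: "k_word_representable m (V1 \<union> {x, y}) ?E"
    by (rule glue_k[OF r1 rk assms(3) i1 _ _ c1]) auto
  have i2: "(V1 \<union> {x, y}) \<inter> V2 = {y}" using dis yV xn2 by auto
  have c2: "\<forall>a\<in>(V1 \<union> {x, y}) - {y}. \<forall>b\<in>V2 - {y}. (a, b) \<notin> ?E \<and> (b, a) \<notin> ?E"
    unfolding bridge_E_def using E1sub E2sub dis xn2 yn1 xy by auto
  have "k_word_representable m ((V1 \<union> {x, y}) \<union> V2) ?E"
    by (rule glue_k[OF g r2 assms(3) i2 _ _ c2]) auto
  moreover have "(V1 \<union> {x, y}) \<union> V2 = bridge_V V1 V2" unfolding bridge_V_def using xV yV by auto
  ultimately show ?thesis by simp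
qed

lemma LB_bridge1:
  assumes "k_word_representable m (bridge_V V1 V2) (bridge_E E1 E2 x y)"
  shows "k_word_representable m V1 E1"
  by (rule restrict_k[OF assms]) (use bE_V1 in \<open>auto simp: bridge_V_def\<close>)

lemma LB_bridge2:
  assumes "k_word_representable m (bridge_V V1 V2) (bridge_E E1 E2 x y)"
  shows "k_word_representable m V2 E2"
  by (rule restrict_k[OF assms]) (use bE_V2 in \<open>auto simp: bridge_V_def\<close>)

lemma other_elem:
  assumes "card V > 1" "u \<in> V" shows "\<exists>a\<in>V. a \<noteq> u"
proof (rule ccontr)
  assume "\<not> ?thesis"
  then have "V \<subseteq> {u}" by auto
  moreover have "finite V" using assms(1) by (metis card.infinite not_less_zero)
  ultimately have "card V \<le> 1" using card_mono[of "{u}" V] by simp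
  then show False using assms(1) by simp
qed

lemma notcomplete_bridge:
  assumes "card V1 > 1 \<or> card V2 > 1"
  shows "\<not> complete_graph (bridge_V V1 V2) (bridge_E E1 E2 x y)"
proof (cases "card V1 > 1")
  case True
  then obtain a where a: "a \<in> V1" "a \<noteq> x" using other_elem[OF _ xV] by blast
  have "(a, y) \<notin> E1" using E1sub yn1 by auto
  moreover have "(a, y) \<notin> E2" using E2sub a dis by auto
  ultimately have "(a, y) \<notin> bridge_E E1 E2 x y" unfolding bridge_E_def using a yn1 by auto
  moreover have "a \<noteq> y" using a yn1 by auto
  ultimately show ?thesis unfolding complete_graph_def bridge_V_def using a yV by blast
next
  case False
  then have "card V2 > 1" using assms by blast
  then obtain b where b: "b \<in> V2" "b \<noteq> y" using other_elem[OF _ yV] by blast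
  have "(x, b) \<notin> E1" using E1sub b dis by auto
  moreover have "(x, b) \<notin> E2" using E2sub xn2 by auto
  ultimately have "(x, b) \<notin> bridge_E E1 E2 x y" unfolding bridge_E_def using b xy by auto
  moreover have "x \<noteq> b" using b xn2 by auto
  ultimately show ?thesis unfolding complete_graph_def bridge_V_def using b xV by blast
qed

lemma notcomplete_ident:
  assumes "card V1 > 1" "card V2 > 1"
  shows "\<not> complete_graph (ident_V V1 V2 x y z) (ident_E E1 E2 x y z)"
proof -
  obtain a where a: "a \<in> V1" "a \<noteq> x" using other_elem[OF assms(1) xV] by blast
  obtain b where b: "b \<in> V2" "b \<noteq> y" using other_elem[OF assms(2) yV] by blast
  have pa: "a \<in> f1 ` V1 - {z}" using a zV img1 by auto
  have pb: "b \<in> f2 ` V2 - {z}" using b zV img2 by auto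
  have "(a, b) \<notin> ident_E E1 E2 x y z" using crossE pa pb by blast
  moreover have "a \<noteq> b" using a b dis by auto
  moreover have "a \<in> ident_V V1 V2 x y z" "b \<in> ident_V V1 V2 x y z" using pa pb identV by auto
  ultimately show ?thesis unfolding complete_graph_def by blast
qed

end


theorem theorem16:
  fixes V1 V2 :: "'a set" and E1 E2 :: "('a \<times> 'a) set" and x y z :: 'a
    and k1 k2 k :: nat
  assumes "simple_graph V1 E1" and "simple_graph V2 E2"
    and "word_representable V1 E1" and "word_representable V2 E2"
    and "V1 \<inter> V2 = {}"
    and "rep_num V1 E1 = k1" and "rep_num V2 E2 = k2"
    and "x \<in> V1" and "y \<in> V2"
    and "z \<notin> (V1 - {x}) \<union> (V2 - {y})"
    and "k = max k1 k2"
  shows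
    "(card V1 = 1 \<and> card V2 = 1 \<longrightarrow>
        complete_graph (bridge_V V1 V2) (bridge_E E1 E2 x y) \<and>
        complete_graph (ident_V V1 V2 x y z) (ident_E E1 E2 x y z) \<and>
        k1 = 1 \<and> k2 = 1 \<and>
        rep_num (bridge_V V1 V2) (bridge_E E1 E2 x y) = 1 \<and>
        rep_num (ident_V V1 V2 x y z) (ident_E E1 E2 x y z) = 1) \<and>
     (min (card V1) (card V2) = 1 \<and> max (card V1) (card V2) > 1 \<longrightarrow>
        rep_num (ident_V V1 V2 x y z) (ident_E E1 E2 x y z) = k \<and>
        rep_num (bridge_V V1 V2) (bridge_E E1 E2 x y) = max k 2) \<and>
     (min (card V1) (card V2) > 1 \<longrightarrow>
        rep_num (bridge_V V1 V2) (bridge_E E1 E2 x y) = max k 2 \<and>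
        rep_num (ident_V V1 V2 x y z) (ident_E E1 E2 x y z) = max k 2)"
proof -
  note ctx = assms(1,2,5,8,9,10)
  let ?bV = "bridge_V V1 V2" and ?bE = "bridge_E E1 E2 x y"
  let ?iV = "ident_V V1 V2 x y z" and ?iE = "ident_E E1 E2 x y z"
  have V1ne: "V1 \<noteq> {}" and V2ne: "V2 \<noteq> {}" using assms(8,9) by auto
  have ex1: "\<exists>k. k_word_representable k V1 E1" by (rule wr_krep[OF assms(3) V1ne])
  have ex2: "\<exists>k. k_word_representable k V2 E2" by (rule wr_krep[OF assms(4) V2ne])
  have K1: "k_word_representable k1 V1 E1" using rep_num_props(1)[OF ex1] assms(6) by simp
  have K2': "k_word_representable k2 V2 E2" using rep_num_props(1)[OF ex2] assms(7) by simp
  have min1: "k1 \<le> m" if "k_word_representable m V1 E1" for m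
    using rep_num_props(2)[OF ex1 that] assms(6) by simp
  have min2: "k2 \<le> m" if "k_word_representable m V2 E2" for m
    using rep_num_props(2)[OF ex2 that] assms(7) by simp
  have k1pos: "k1 \<ge> 1" by (rule krep_pos[OF K1 V1ne])
  have k2pos: "k2 \<ge> 1" by (rule krep_pos[OF K2' V2ne])
  have raise1: "k_word_representable m V1 E1" if "k1 \<le> m" for m by (rule krep_raise[OF K1 that V1ne])
  have raise2: "k_word_representable m V2 E2" if "k2 \<le> m" for m by (rule krep_raise[OF K2' that V2ne])
  have bVne: "?bV \<noteq> {}" using assms(8) unfolding bridge_V_def by auto
  have iVne: "?iV \<noteq> {}" unfolding ident_V_def by auto
  have lbB: "max k 2 \<le> m" if "k_word_representable m ?bV ?bE" "card V1 > 1 \<or> card V2 > 1" for m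
  proof -
    have "k1 \<le> m" using min1[OF LB_bridge1[OF ctx that(1)]] .
    moreover have "k2 \<le> m" using min2[OF LB_bridge2[OF ctx that(1)]] .
    moreover have "m \<ge> 1" using krep_pos[OF that(1) bVne] .
    moreover have "m \<noteq> 1" using krep1_complete notcomplete_bridge[OF ctx that(2)] that(1) by metis
    ultimately show ?thesis using assms(11) by simp
  qed
  have bridge_val: "rep_num ?bV ?bE = max k 2" if "card V1 > 1 \<or> card V2 > 1"
  proof (rule rep_num_eq)
    show "k_word_representable (max k 2) ?bV ?bE"
      by (rule UB_bridge[OF ctx]) (auto intro!: raise1 raise2 simp: assms(11))
  next
    fix m assume "k_word_representable m ?bV ?bE"
    then show "max k 2 \<le> m" using lbB that by blast
  qed
  have single1: "k1 = 1" if "card V1 = 1"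
  proof -
    have "V1 = {x}" using that assms(8) by (metis card_1_singletonE singletonD)
    then have "k1 \<le> 1" using min1 single_krep by metis
    then show ?thesis using k1pos by simp
  qed
  have single2: "k2 = 1" if "card V2 = 1"
  proof -
    have "V2 = {y}" using that assms(9) by (metis card_1_singletonE singletonD)
    then have "k2 \<le> 1" using min2 single_krep by metis
    then show ?thesis using k2pos by simp
  qed
  have P1: "complete_graph ?bV ?bE \<and> complete_graph ?iV ?iE \<and> k1 = 1 \<and> k2 = 1 \<and>
        rep_num ?bV ?bE = 1 \<and> rep_num ?iV ?iE = 1" if c: "card V1 = 1" "card V2 = 1"
  proof -
    have v1: "V1 = {x}" using c(1) assms(8) by (metis card_1_singletonE singletonD)
    have v2: "V2 = {y}" using c(2) assms(9) by (metis card_1_singletonE singletonD)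
    have bv: "?bV = {x, y}" using v1 v2 unfolding bridge_V_def by auto
    have iv: "?iV = {z}" using v1 v2 unfolding ident_V_def by auto
    have cb: "complete_graph ?bV ?bE" unfolding bv complete_graph_def bridge_E_def by auto
    have ci: "complete_graph ?iV ?iE" unfolding iv complete_graph_def by auto
    have rb: "rep_num ?bV ?bE = 1"
    proof (rule rep_num_eq)
      show "k_word_representable 1 ?bV ?bE" using K2[OF ctx] bv by simp
    next
      fix m assume "k_word_representable m ?bV ?bE"
      then show "1 \<le> m" using krep_pos bVne by blast
    qed
    have ri: "rep_num ?iV ?iE = 1"
    proof (rule rep_num_eq)
      show "k_word_representable 1 ?iV ?iE" using single_krep[of z ?iE] iv by simp
    next
      fix m assume "k_word_representable m ?iV ?iE"
      then show "1 \<le> m" using krep_pos iVne by blast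
    qed
    show ?thesis using cb ci rb ri single1[OF c(1)] single2[OF c(2)] by blast
  qed
  have P2: "rep_num ?iV ?iE = k \<and> rep_num ?bV ?bE = max k 2"
    if c: "min (card V1) (card V2) = 1" "max (card V1) (card V2) > 1"
  proof -
    have "card V1 > 1 \<or> card V2 > 1" using c(2) by linarith
    then have b: "rep_num ?bV ?bE = max k 2" by (rule bridge_val)
    have "(card V1 = 1 \<and> card V2 > 1) \<or> (card V2 = 1 \<and> card V1 > 1)" using c by linarith
    then have "rep_num ?iV ?iE = k"
    proof
      assume h: "card V1 = 1 \<and> card V2 > 1"
      then have kk: "k = k2" using single1 k2pos assms(11) by simp
      show ?thesis
      proof (rule rep_num_eq)
        show "k_word_representable k ?iV ?iE" using UB_ident_single1[OF ctx _ K2'] h kk by simp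
      next
        fix m assume "k_word_representable m ?iV ?iE"
        then show "k \<le> m" using min2[OF LB_ident2[OF ctx]] kk by simp
      qed
    next
      assume h: "card V2 = 1 \<and> card V1 > 1"
      then have kk: "k = k1" using single2 k1pos assms(11) by simp
      show ?thesis
      proof (rule rep_num_eq)
        show "k_word_representable k ?iV ?iE" using UB_ident_single2[OF ctx _ K1] h kk by simp
      next
        fix m assume "k_word_representable m ?iV ?iE"
        then show "k \<le> m" using min1[OF LB_ident1[OF ctx]] kk by simp
      qed
    qed
    then show ?thesis using b by simp
  qed
  have P3: "rep_num ?bV ?bE = max k 2 \<and> rep_num ?iV ?iE = max k 2"
    if c: "min (card V1) (card V2) > 1"
  proof -
    have c1: "card V1 > 1" "card V2 > 1" using c by auto
    have b: "rep_num ?bV ?bE = max k 2" using c1 by (intro bridge_val) simp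
    have "rep_num ?iV ?iE = max k 2"
    proof (rule rep_num_eq)
      show "k_word_representable (max k 2) ?iV ?iE"
        by (rule UB_ident[OF ctx]) (auto intro!: raise1 raise2 simp: assms(11))
    next
      fix m assume h: "k_word_representable m ?iV ?iE"
      have "k1 \<le> m" using min1[OF LB_ident1[OF ctx h]] .
      moreover have "k2 \<le> m" using min2[OF LB_ident2[OF ctx h]] .
      moreover have "m \<ge> 1" using krep_pos[OF h iVne] .
      moreover have "m \<noteq> 1" using krep1_complete notcomplete_ident[OF ctx c1] h by metis
      ultimately show "max k 2 \<le> m" using assms(11) by simp
    qed
    then show ?thesis using b by simp
  qed
  show ?thesis using P1 P2 P3 by blast
qed

end
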